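(* Let $G$ be a non-amenable group and let $H$ be a subgroup of finite index in $G$. Then $$\mathcal{T}(H)-2\leq [G:H]\,(\mathcal{T}(G)-2).$$
   Context: A group $G$ admits a paradoxical decomposition if there exist positive integers $m,n$, pairwise disjoint subsets $P_1,\ldots,P_m,Q_1,\ldots,Q_n$ of $G$ and elements $g_1,\ldots,g_m,h_1,\ldots,h_n\in G$ such that $G=\bigcup_{i=1}^m P_ig_i=\bigcup_{j=1}^n Q_jh_j$. A group admits a paradoxical decomposition if and only if it is non-amenable. For a non-amenable group $G$, the Tarski number $\mathcal{T}(G)$ is the minimal possible value of $m+n$ over all paradoxical decompositions of $G$ (a finite index subgroup of a non-amenable group is non-amenable). *)

theory Defs
  imports "HOL-Algebra.Coset"
begin

definition paradoxical_decomp :: "('a, 'b) monoid_scheme \<Rightarrow> nat \<Rightarrow> nat \<Rightarrow> bool" where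
  "paradoxical_decomp G m n \<longleftrightarrow> 0 < m \<and> 0 < n \<and>
     (\<exists>P Q :: nat \<Rightarrow> 'a set. \<exists>g h :: nat \<Rightarrow> 'a.
        (\<forall>i<m. P i \<subseteq> carrier G \<and> g i \<in> carrier G) \<and>
        (\<forall>j<n. Q j \<subseteq> carrier G \<and> h j \<in> carrier G) \<and>
        (\<forall>i<m. \<forall>i'<m. i \<noteq> i' \<longrightarrow> P i \<inter> P i' = {}) \<and>
        (\<forall>j<n. \<forall>j'<n. j \<noteq> j' \<longrightarrow> Q j \<inter> Q j' = {}) \<and>
        (\<forall>i<m. \<forall>j<n. P i \<inter> Q j = {}) \<and>
        (\<Union>i<m. P i #>\<^bsub>G\<^esub> g i) = carrier G \<and>
        (\<Union>j<n. Q j #>\<^bsub>G\<^esub> h j) = carrier G)"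

definition admits_paradoxical_decomp :: "('a, 'b) monoid_scheme \<Rightarrow> bool" where
  "admits_paradoxical_decomp G \<longleftrightarrow> (\<exists>m n. paradoxical_decomp G m n)"

text \<open>Non-amenability, via the stated equivalence with admitting a paradoxical decomposition.\<close>
definition non_amenable :: "('a, 'b) monoid_scheme \<Rightarrow> bool" where
  "non_amenable G \<longleftrightarrow> admits_paradoxical_decomp G"

definition tarski_number :: "('a, 'b) monoid_scheme \<Rightarrow> nat" where
  "tarski_number G = (LEAST k. \<exists>m n. m + n = k \<and> paradoxical_decomp G m n)"

end

theory Submission
  imports Defs
begin

lemma hall_inf:
  fixes A :: "'i \<Rightarrow> 'b set" and I :: "'i set"
  assumes fin: "\<And>i. i \<in> I \<Longrightarrow> finite (A i)"
    and hall: "\<And>F. F \<subseteq> I \<Longrightarrow> finite F \<Longrightarrow> card F \<le> card (\<Union>(A ` F))"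
  shows "\<exists>f. inj_on f I \<and> (\<forall>i\<in>I. f i \<in> A i)"
proof -
  define E where "E = Sigma I A"
  define sec where "sec S i = {b. (i,b) \<in> E - S}" for S i
  define good where "good S \<longleftrightarrow> S \<subseteq> E \<and> (\<forall>F. F \<subseteq> I \<longrightarrow> finite F \<longrightarrow> card F \<le> card (\<Union>(sec S ` F)))" for S
  have secE: "sec {} i = A i" if "i \<in> I" for i using that by (auto simp: sec_def E_def)
  have "\<exists>M\<in>Collect good. \<forall>X\<in>Collect good. M \<subseteq> X \<longrightarrow> X = M"
  proof (rule Zorn_Lemma, intro ballI)
    fix C assume C: "C \<in> chains (Collect good)"
    have "\<forall>S\<in>C. good S" using chainsD2[OF C] by auto
    then have CE: "\<Union>C \<subseteq> E" unfolding good_def by blast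
    show "\<Union>C \<in> Collect good"
    proof (simp add: good_def CE, intro allI impI)
      fix F assume F: "F \<subseteq> I" "finite F"
      define W where "W = \<Union>C \<inter> Sigma F A"
      have fW: "finite W" unfolding W_def using F fin by (intro finite_Int disjI2 finite_SigmaI) auto
      show "card F \<le> card (\<Union>(sec (\<Union>C) ` F))"
      proof (cases "W = {}")
        case True
        have "sec (\<Union>C) i = A i" if "i \<in> F" for i
          using True that F unfolding sec_def W_def E_def by auto
        then have "\<Union>(sec (\<Union>C) ` F) = \<Union>(A ` F)" by auto
        then show ?thesis using hall F by simp
      next
        case False
        have Cne: "C \<noteq> {}" using False W_def by auto
        have sch: "subset.chain (Collect good) C" using C by (simp add: chains_alt_def)
        obtain S0 where S0: "S0 \<in> C" "W \<subseteq> S0"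
          using finite_subset_Union_chain[OF fW _ Cne sch] W_def by blast
        have "sec (\<Union>C) i = sec S0 i" if "i \<in> F" for i
          using that S0 F unfolding sec_def W_def E_def by auto
        then have "\<Union>(sec (\<Union>C) ` F) = \<Union>(sec S0 ` F)" by auto
        moreover have "good S0" using chainsD2[OF C] S0 by auto
        ultimately show ?thesis using F good_def by simp
      qed
    qed
  qed
  then obtain M where Mg: "good M" and Mmax: "\<And>X. good X \<Longrightarrow> M \<subseteq> X \<Longrightarrow> X = M" by auto
  have goodM: "card F \<le> card (\<Union>(sec M ` F))" if "F \<subseteq> I" "finite F" for F
    using Mg that unfolding good_def by blast
  have secfin: "finite (sec M i)" if "i \<in> I" for i
    using fin[OF that] by (rule finite_subset[rotated]) (auto simp: sec_def E_def)
  have secsub: "sec M i \<subseteq> A i" for i by (auto simp: sec_def E_def)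
  have ne: "sec M i \<noteq> {}" if "i \<in> I" for i
  proof -
    have "card {i} \<le> card (\<Union>(sec M ` {i}))" using that by (intro goodM) auto
    then show ?thesis by auto
  qed
  have single: "\<exists>x. sec M i = {x}" if i: "i \<in> I" for i
  proof (rule ccontr)
    assume "\<nexists>x. sec M i = {x}"
    then obtain x y where xy: "x \<in> sec M i" "y \<in> sec M i" "x \<noteq> y" using ne[OF i] by blast
    have break: "\<exists>F. F \<subseteq> I \<and> finite F \<and> i \<in> F \<and>
        card (\<Union>(sec M ` (F - {i})) \<union> (sec M i - {z})) < card F"
      if z: "z \<in> sec M i" for z
    proof -
      have ng: "\<not> good (insert (i,z) M)"
      proof
        assume "good (insert (i,z) M)"
        then have "insert (i,z) M = M" using Mmax by blast
        then show False using z by (auto simp: sec_def)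
      qed
      have sub: "insert (i,z) M \<subseteq> E" using Mg z by (auto simp: good_def sec_def)
      obtain F where F: "F \<subseteq> I" "finite F" "\<not> card F \<le> card (\<Union>(sec (insert (i,z) M) ` F))"
        using ng sub unfolding good_def by blast
      have secI: "sec (insert (i,z) M) j = (if j = i then sec M i - {z} else sec M j)" for j
        by (auto simp: sec_def)
      have iF: "i \<in> F"
      proof (rule ccontr)
        assume "i \<notin> F"
        then have "\<Union>(sec (insert (i,z) M) ` F) = \<Union>(sec M ` F)" using secI by auto
        then show False using F goodM by auto
      qed
      have "\<Union>(sec (insert (i,z) M) ` F) = \<Union>(sec M ` (F - {i})) \<union> (sec M i - {z})"
        using iF secI by auto
      then show ?thesis using F iF by (intro exI[of _ F]) auto
    qed
    obtain F1 where F1: "F1 \<subseteq> I" "finite F1" "i \<in> F1"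
      "card (\<Union>(sec M ` (F1 - {i})) \<union> (sec M i - {x})) < card F1" using break[OF xy(1)] by blast
    obtain F2 where F2: "F2 \<subseteq> I" "finite F2" "i \<in> F2"
      "card (\<Union>(sec M ` (F2 - {i})) \<union> (sec M i - {y})) < card F2" using break[OF xy(2)] by blast
    define G1 where "G1 = F1 - {i}"
    define G2 where "G2 = F2 - {i}"
    define X1 where "X1 = \<Union>(sec M ` G1) \<union> (sec M i - {x})"
    define X2 where "X2 = \<Union>(sec M ` G2) \<union> (sec M i - {y})"
    have fG: "finite G1" "finite G2" "G1 \<subseteq> I" "G2 \<subseteq> I" "i \<notin> G1" "i \<notin> G2"
      using F1 F2 by (auto simp: G1_def G2_def)
    have cF1: "card F1 = card G1 + 1" using F1 unfolding G1_def
      by (simp add: card_Diff_singleton)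
    have cF2: "card F2 = card G2 + 1" using F2 unfolding G2_def
      by (simp add: card_Diff_singleton)
    have finX: "finite X1" "finite X2" using fG secfin i
      by (auto simp: X1_def X2_def intro!: finite_Union)
    have U: "X1 \<union> X2 = \<Union>(sec M ` (insert i (G1 \<union> G2)))"
      using xy by (auto simp: X1_def X2_def)
    have In: "\<Union>(sec M ` (G1 \<inter> G2)) \<subseteq> X1 \<inter> X2"
      by (auto simp: X1_def X2_def)
    have h1: "card (insert i (G1 \<union> G2)) \<le> card (X1 \<union> X2)"
      unfolding U using fG i by (intro goodM) auto
    have h2: "card (G1 \<inter> G2) \<le> card (\<Union>(sec M ` (G1 \<inter> G2)))"
      using fG by (intro goodM) auto
    have h3: "card (\<Union>(sec M ` (G1 \<inter> G2))) \<le> card (X1 \<inter> X2)"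
      using In finX by (intro card_mono) auto
    have h4: "card (X1 \<union> X2) + card (X1 \<inter> X2) = card X1 + card X2"
      using card_Un_Int[OF finX] by linarith
    have h5: "card (G1 \<union> G2) + card (G1 \<inter> G2) = card G1 + card G2"
      using card_Un_Int[OF fG(1,2)] by linarith
    have h6: "card (insert i (G1 \<union> G2)) = card (G1 \<union> G2) + 1" using fG by simp
    have "card X1 < card F1" using F1(4) unfolding X1_def G1_def .
    moreover have "card X2 < card F2" using F2(4) unfolding X2_def G2_def .
    ultimately have "card X1 < card G1 + 1" "card X2 < card G2 + 1" using cF1 cF2 by auto
    then show False using h1 h2 h3 h4 h5 h6 by linarith
  qed
  define f where "f i = the_elem (sec M i)" for i
  have fi: "sec M i = {f i}" if iI: "i \<in> I" for i
  proof -
    obtain x where "sec M i = {x}" using single[OF iI] by blast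
    then show ?thesis unfolding f_def by simp
  qed
  have "inj_on f I"
  proof (rule inj_onI, rule ccontr)
    fix i j assume ij: "i \<in> I" "j \<in> I" "f i = f j" "i \<noteq> j"
    have "card {i,j} \<le> card (\<Union>(sec M ` {i,j}))" using ij by (intro goodM) auto
    moreover have "\<Union>(sec M ` {i,j}) = {f i}" using fi ij by simp
    ultimately show False using ij(4) by simp
  qed
  moreover have "\<forall>i\<in>I. f i \<in> A i" using fi secsub by blast
  ultimately show ?thesis by blast
qed



lemma one_side:
  fixes G :: "('a, 'b) monoid_scheme" (structure)
  assumes G: "group G" and m: "0 < m"
    and Pg: "\<forall>i<m. P i \<subseteq> carrier G \<and> g i \<in> carrier G"
    and disj: "\<forall>i<m. \<forall>i'<m. i \<noteq> i' \<longrightarrow> P i \<inter> P i' = {}"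
    and cov: "(\<Union>i<m. P i #>\<^bsub>G\<^esub> g i) = carrier G"
  shows "\<exists>\<sigma> U. inj_on \<sigma> (carrier G) \<and> \<sigma> ` carrier G \<subseteq> (\<Union>i<m. P i) \<and> U \<subseteq> carrier G
     \<and> finite U \<and> card U \<le> m \<and> \<one>\<^bsub>G\<^esub> \<in> U \<and> (\<forall>y\<in>carrier G. \<exists>u\<in>U. \<sigma> y = y \<otimes>\<^bsub>G\<^esub> u)"
proof -
  interpret group G by fact
  have ex: "\<exists>p. \<exists>i<m. p \<in> P i \<and> y = p \<otimes> g i" if "y \<in> carrier G" for y
    using that cov unfolding r_coset_def by blast
  define s0 where "s0 y = (SOME p. \<exists>i<m. p \<in> P i \<and> y = p \<otimes> g i)" for y
  have s0: "\<exists>i<m. s0 y \<in> P i \<and> y = s0 y \<otimes> g i" if "y \<in> carrier G" for y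
    unfolding s0_def using someI_ex[OF ex[OF that]] .
  have g0: "g 0 \<in> carrier G" using Pg m by auto
  define \<sigma> where "\<sigma> y = s0 (y \<otimes> g 0)" for y
  define U where "U = (\<lambda>i. g 0 \<otimes> inv (g i)) ` {..<m}"
  have sig: "\<exists>i<m. \<sigma> y \<in> P i \<and> y \<otimes> g 0 = \<sigma> y \<otimes> g i" if "y \<in> carrier G" for y
    unfolding \<sigma>_def using s0 that g0 by auto
  have "inj_on \<sigma> (carrier G)"
  proof (rule inj_onI)
    fix y y' assume y: "y \<in> carrier G" "y' \<in> carrier G" "\<sigma> y = \<sigma> y'"
    obtain i where i: "i < m" "\<sigma> y \<in> P i" "y \<otimes> g 0 = \<sigma> y \<otimes> g i" using sig y by blast
    obtain i' where i': "i' < m" "\<sigma> y' \<in> P i'" "y' \<otimes> g 0 = \<sigma> y' \<otimes> g i'" using sig y by blast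
    have "i = i'"
    proof (rule ccontr)
      assume "i \<noteq> i'"
      then have "P i \<inter> P i' = {}" using disj i(1) i'(1) by blast
      then show False using i(2) i'(2) y(3) by auto
    qed
    then have "y \<otimes> g 0 = y' \<otimes> g 0" using i i' y by simp
    then show "y = y'" using y g0 by simp
  qed
  moreover have "\<sigma> ` carrier G \<subseteq> (\<Union>i<m. P i)" using sig by blast
  moreover have "U \<subseteq> carrier G" using Pg g0 unfolding U_def by auto
  moreover have "finite U" "card U \<le> m" unfolding U_def
    using card_image_le[of "{..<m}"] by auto
  moreover have "\<one> \<in> U" unfolding U_def using m g0 by (auto intro!: image_eqI[of _ _ 0])
  moreover have "\<forall>y\<in>carrier G. \<exists>u\<in>U. \<sigma> y = y \<otimes> u"
  proof
    fix y assume y: "y \<in> carrier G"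
    obtain i where i: "i < m" "\<sigma> y \<in> P i" "y \<otimes> g 0 = \<sigma> y \<otimes> g i" using sig y by blast
    have gi: "g i \<in> carrier G" "\<sigma> y \<in> carrier G" using Pg i by auto
    have "\<sigma> y = y \<otimes> g 0 \<otimes> inv (g i)" using i(3) gi y g0
      by (metis inv_solve_right m_closed)
    then have "\<sigma> y = y \<otimes> (g 0 \<otimes> inv (g i))" using gi y g0 by (simp add: m_assoc)
    then show "\<exists>u\<in>U. \<sigma> y = y \<otimes> u" unfolding U_def using i(1) by blast
  qed
  ultimately show ?thesis by blast
qed



lemma half_build:
  fixes G :: "('a, 'b) monoid_scheme" (structure)
  assumes G: "group G" and H: "subgroup H G" and D: "D \<subseteq> H" "finite D"
    and bij: "bij_betw e {0..<card D} D"
    and fD': "\<forall>h\<in>H. f (h, b) \<in> (\<lambda>d. h \<otimes> d) ` D"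
    and inj: "inj_on f (H \<times> UNIV)"
    and P_def: "P = (\<lambda>i. {x. \<exists>h\<in>H. x = f (h, b) \<and> x = h \<otimes> e i})"
  shows "\<forall>i<card D. P i \<subseteq> H \<and> inv (e i) \<in> H"
    and "\<forall>i<card D. \<forall>i'<card D. i \<noteq> i' \<longrightarrow> P i \<inter> P i' = {}"
    and "(\<Union>i<card D. P i #>\<^bsub>G\<lparr>carrier := H\<rparr>\<^esub> inv (e i)) = H"
    and "P i \<subseteq> f ` (H \<times> {b})"
proof -
  interpret group G by fact
  interpret subgroup H G by fact
  have fD: "f (h, b) \<in> (\<lambda>d. h \<otimes> d) ` D" if "h \<in> H" for h using fD' that by blast
  have eD: "e i \<in> D" if "i < card D" for i using bij that by (auto simp: bij_betw_def)
  have eH: "e i \<in> H" if "i < card D" for i using eD[OF that] D by blast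
  show "\<forall>i<card D. P i \<subseteq> H \<and> inv (e i) \<in> H"
    using eH unfolding P_def by (auto intro!: m_closed)
  show "\<forall>i<card D. \<forall>i'<card D. i \<noteq> i' \<longrightarrow> P i \<inter> P i' = {}"
  proof (intro allI impI)
    fix i i' assume ii: "i < card D" "i' < card D" "i \<noteq> i'"
    show "P i \<inter> P i' = {}"
    proof (rule ccontr)
      assume "P i \<inter> P i' \<noteq> {}"
      then obtain h h' where hh: "h \<in> H" "h' \<in> H" "f (h,b) = h \<otimes> e i" "f (h',b) = h' \<otimes> e i'"
        "f (h,b) = f (h',b)" unfolding P_def by auto
      have "(h,b) = (h',b)" using inj_onD[OF inj hh(5)] hh(1,2) by blast
      then have "h = h'" by simp
      then have "h \<otimes> e i = h \<otimes> e i'" using hh by simp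
      moreover have "h \<in> carrier G" "e i \<in> carrier G" "e i' \<in> carrier G"
        using hh(1) eH ii by (auto intro: mem_carrier)
      ultimately have "e i = e i'" by simp
      then show False using bij ii by (auto simp: bij_betw_def inj_on_def)
    qed
  qed
  show "(\<Union>i<card D. P i #>\<^bsub>G\<lparr>carrier := H\<rparr>\<^esub> inv (e i)) = H"
  proof
    show "(\<Union>i<card D. P i #>\<^bsub>G\<lparr>carrier := H\<rparr>\<^esub> inv (e i)) \<subseteq> H"
      using eH unfolding P_def r_coset_def by (auto intro!: m_closed)
    show "H \<subseteq> (\<Union>i<card D. P i #>\<^bsub>G\<lparr>carrier := H\<rparr>\<^esub> inv (e i))"
    proof
      fix h assume h: "h \<in> H"
      obtain d where d: "d \<in> D" "f (h,b) = h \<otimes> d" using fD[OF h] by blast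
      obtain i where i: "i < card D" "e i = d" using bij d(1) unfolding bij_betw_def by (metis atLeastLessThan_iff imageE)
      have "f (h,b) \<in> P i" unfolding P_def using h d i by (intro CollectI bexI[of _ h]) auto
      moreover have "h = f (h,b) \<otimes> inv (e i)" using d i h D
        by (simp add: m_assoc subsetD)
      ultimately show "h \<in> (\<Union>i<card D. P i #>\<^bsub>G\<lparr>carrier := H\<rparr>\<^esub> inv (e i))"
        using i unfolding r_coset_def by auto
    qed
  qed
  show "P i \<subseteq> f ` (H \<times> {b})" unfolding P_def by auto
qed



lemma build_decomp:
  fixes G :: "('a, 'b) monoid_scheme" (structure)
  assumes G: "group G" and H: "subgroup H G"
    and D1: "D1 \<subseteq> H" "finite D1" "D1 \<noteq> {}" and D2: "D2 \<subseteq> H" "finite D2" "D2 \<noteq> {}"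
    and f1: "\<And>h. h \<in> H \<Longrightarrow> f (h, False) \<in> (\<lambda>d. h \<otimes> d) ` D1"
    and f2: "\<And>h. h \<in> H \<Longrightarrow> f (h, True) \<in> (\<lambda>d. h \<otimes> d) ` D2"
    and inj: "inj_on f (H \<times> UNIV)"
  shows "paradoxical_decomp (G\<lparr>carrier := H\<rparr>) (card D1) (card D2)"
proof -
  obtain e1 where e1: "bij_betw e1 {0..<card D1} D1" using ex_bij_betw_nat_finite[OF D1(2)] by blast
  obtain e2 where e2: "bij_betw e2 {0..<card D2} D2" using ex_bij_betw_nat_finite[OF D2(2)] by blast
  define P where "P = (\<lambda>i. {x. \<exists>h\<in>H. x = f (h, False) \<and> x = h \<otimes> e1 i})"
  define Q where "Q = (\<lambda>i. {x. \<exists>h\<in>H. x = f (h, True) \<and> x = h \<otimes> e2 i})"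
  have f1': "\<forall>h\<in>H. f (h, False) \<in> (\<lambda>d. h \<otimes> d) ` D1" using f1 by blast
  have f2': "\<forall>h\<in>H. f (h, True) \<in> (\<lambda>d. h \<otimes> d) ` D2" using f2 by blast
  note A = half_build[OF G H D1(1,2) e1 f1' inj P_def]
  note B = half_build[OF G H D2(1,2) e2 f2' inj Q_def]
  have disj: "f ` (H \<times> {False}) \<inter> f ` (H \<times> {True}) = {}"
  proof (rule equals0I)
    fix x assume "x \<in> f ` (H \<times> {False}) \<inter> f ` (H \<times> {True})"
    then have x1: "x \<in> f ` (H \<times> {False})" and x2: "x \<in> f ` (H \<times> {True})" by auto
    obtain p where p: "p \<in> H \<times> {False}" "x = f p" using x1 by (rule imageE)
    obtain q where q: "q \<in> H \<times> {True}" "x = f q" using x2 by (rule imageE)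
    have "f p = f q" using p q by simp
    moreover have "p \<in> H \<times> UNIV" "q \<in> H \<times> UNIV" using p q by auto
    ultimately have "p = q" using inj_onD[OF inj] by blast
    then show False using p q by auto
  qed
  have PQ: "\<forall>i<card D1. \<forall>j<card D2. P i \<inter> Q j = {}"
  proof (intro allI impI)
    fix i j
    have "P i \<inter> Q j \<subseteq> f ` (H \<times> {False}) \<inter> f ` (H \<times> {True})"
      using A(4)[of i] B(4)[of j] by (rule Int_mono)
    then show "P i \<inter> Q j = {}" using disj by (metis subset_empty)
  qed
  have cH: "carrier (G\<lparr>carrier := H\<rparr>) = H" by simp
  have c1: "0 < card D1" "0 < card D2" using D1 D2 by (auto simp: card_gt_0_iff)
  show ?thesis unfolding paradoxical_decomp_def cH
    apply (rule conjI, rule c1, rule conjI, rule c1)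
    apply (rule exI[of _ P], rule exI[of _ Q], rule exI[of _ "\<lambda>i. inv (e1 i)"], rule exI[of _ "\<lambda>i. inv (e2 i)"])
    apply (intro conjI)
    apply (rule A(1))
    apply (rule B(1))
    apply (rule A(2))
    apply (rule B(2))
    apply (rule PQ)
    apply (rule A(3))
    apply (rule B(3))
    done
qed



lemma reps:
  fixes G :: "('a, 'b) monoid_scheme" (structure)
  assumes G: "group G" and H: "subgroup H G" and fin: "finite (rcosets H)"
  shows "\<exists>T. T \<subseteq> carrier G \<and> finite T \<and> card T = card (rcosets H)
    \<and> (\<forall>x\<in>carrier G. \<exists>s\<in>T. x \<otimes> inv s \<in> H)
    \<and> (\<forall>h\<in>H. \<forall>h'\<in>H. \<forall>t\<in>T. \<forall>t'\<in>T. h \<otimes> t = h' \<otimes> t' \<longrightarrow> t = t')"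
proof -
  interpret group G by fact
  interpret subgroup H G by fact
  define rep where "rep C = (SOME x. x \<in> C)" for C :: "'a set"
  have rp: "rep C \<in> C \<and> rep C \<in> carrier G \<and> H #> rep C = C" if Cr: "C \<in> rcosets H" for C
  proof -
    obtain a where a: "a \<in> carrier G" "C = H #> a" using Cr unfolding RCOSETS_def by blast
    have "a \<in> C" using a rcos_self H by blast
    then have r: "rep C \<in> C" unfolding rep_def by (rule someI)
    then have "rep C \<in> carrier G" using r a r_coset_subset_G[OF subset a(1)] by blast
    moreover have "H #> a = H #> rep C" using repr_independence[OF _ a(1) H] r a(2) by blast
    then have "H #> rep C = C" using a(2) by simp
    ultimately show ?thesis using r by blast
  qed
  define T where "T = rep ` (rcosets H)"
  have injr: "inj_on rep (rcosets H)"
  proof (rule inj_onI)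
    fix C C' assume CC: "C \<in> rcosets H" "C' \<in> rcosets H" "rep C = rep C'"
    have "C = H #> rep C" using rp[OF CC(1)] by simp
    also have "\<dots> = H #> rep C'" using CC(3) by simp
    also have "\<dots> = C'" using rp[OF CC(2)] by simp
    finally show "C = C'" .
  qed
  have "T \<subseteq> carrier G" unfolding T_def using rp by auto
  moreover have "finite T" using fin unfolding T_def by simp
  moreover have "card T = card (rcosets H)" unfolding T_def using card_image[OF injr] .
  moreover have "\<forall>x\<in>carrier G. \<exists>s\<in>T. x \<otimes> inv s \<in> H"
  proof
    fix x assume x: "x \<in> carrier G"
    have C: "H #> x \<in> rcosets H" using rcosetsI[OF subset x] .
    define s where "s = rep (H #> x)"
    have s: "s \<in> H #> x" "s \<in> carrier G" "H #> s = H #> x" using rp[OF C] s_def by auto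
    have "x \<in> H #> s" using s(3) rcos_self[OF x H] by simp
    then have "x \<otimes> inv s \<in> H" using rcos_module_imp[OF G s(2)] by blast
    moreover have "s \<in> T" unfolding T_def s_def using C by blast
    ultimately show "\<exists>s\<in>T. x \<otimes> inv s \<in> H" by blast
  qed
  moreover have "\<forall>h\<in>H. \<forall>h'\<in>H. \<forall>t\<in>T. \<forall>t'\<in>T. h \<otimes> t = h' \<otimes> t' \<longrightarrow> t = t'"
  proof (intro ballI impI)
    fix h h' t t' assume hh: "h \<in> H" "h' \<in> H" "t \<in> T" "t' \<in> T" and eq: "h \<otimes> t = h' \<otimes> t'"
    obtain C where C: "C \<in> rcosets H" "t = rep C" using hh(3) unfolding T_def by blast
    obtain C' where C': "C' \<in> rcosets H" "t' = rep C'" using hh(4) unfolding T_def by blast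
    have tc: "t \<in> carrier G" "t' \<in> carrier G" using rp C C' by auto
    have hc: "h \<in> carrier G" "h' \<in> carrier G" using hh by (auto intro: mem_carrier)
    have "t' = inv h' \<otimes> (h \<otimes> t)" using eq hh tc hc
      by (simp add: inv_solve_left)
    then have "t' = inv h' \<otimes> h \<otimes> t" using hc tc by (simp add: m_assoc)
    then have "t' \<in> H #> t" using hh tc by (auto simp: r_coset_def intro!: m_closed)
    then have "H #> t = H #> t'" using repr_independence[OF _ tc(1) H] by blast
    then have "C = C'" using rp[OF C(1)] rp[OF C'(1)] C(2) C'(2) by simp
    then show "t = t'" using C C' by simp
  qed
  ultimately show ?thesis by blast
qed



lemma Dprops:
  fixes G :: "('a, 'b) monoid_scheme" (structure)
  assumes G: "group G" and H: "subgroup H G"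
    and T: "T \<subseteq> carrier G" "finite T" "T \<noteq> {}"
    and cT': "\<forall>x\<in>carrier G. c x \<in> T \<and> x \<otimes> inv (c x) \<in> H"
    and ct': "\<forall>t\<in>T. c t = t"
    and U: "U \<subseteq> carrier G" "finite U" "\<one> \<in> U"
    and D_def: "D = (\<lambda>p. fst p \<otimes> snd p \<otimes> inv (c (fst p \<otimes> snd p))) ` (T \<times> U)"
  shows "D \<subseteq> H" "finite D" "\<one> \<in> D" "card D \<le> 1 + card T * (card U - 1)"
    and "\<And>h t u. h \<in> H \<Longrightarrow> t \<in> T \<Longrightarrow> u \<in> U \<Longrightarrow> \<exists>d\<in>D. \<exists>s\<in>T. h \<otimes> t \<otimes> u = h \<otimes> d \<otimes> s"
proof -
  interpret group G by fact
  interpret subgroup H G by fact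
  have cT: "c x \<in> T \<and> x \<otimes> inv (c x) \<in> H" if xc: "x \<in> carrier G" for x using cT' xc by blast
  have ct: "c t = t" if tT: "t \<in> T" for t using ct' tT by blast
  define \<phi> where "\<phi> p = fst p \<otimes> snd p \<otimes> inv (c (fst p \<otimes> snd p))" for p
  have Dphi: "D = \<phi> ` (T \<times> U)" unfolding D_def \<phi>_def by simp
  have phiH: "\<phi> (t, u) \<in> H" if "t \<in> T" "u \<in> U" for t u
  proof -
    have "t \<otimes> u \<in> carrier G" using that T U by auto
    then show ?thesis unfolding \<phi>_def using cT by simp
  qed
  show "D \<subseteq> H" unfolding Dphi using phiH by auto
  show "finite D" unfolding Dphi using T U by simp
  have phi1: "\<phi> (t, \<one>) = \<one>" if t: "t \<in> T" for t
  proof -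
    have tc: "t \<in> carrier G" using t T by auto
    then show ?thesis unfolding \<phi>_def using ct[OF t] by simp
  qed
  obtain t0 where t0: "t0 \<in> T" using T by blast
  show "\<one> \<in> D" unfolding Dphi using phi1[OF t0] t0 U(3) by (auto intro!: image_eqI[of _ _ "(t0, \<one>)"])
  have "D \<subseteq> insert \<one> (\<phi> ` (T \<times> (U - {\<one>})))"
    unfolding Dphi using phi1 by auto
  then have "card D \<le> card (insert \<one> (\<phi> ` (T \<times> (U - {\<one>}))))"
    using T U by (intro card_mono) auto
  also have "\<dots> \<le> Suc (card (\<phi> ` (T \<times> (U - {\<one>}))))" by (rule card_insert_le_m1) auto
  also have "\<dots> \<le> Suc (card (T \<times> (U - {\<one>})))"
    using card_image_le[of "T \<times> (U - {\<one>})" \<phi>] T U by simp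
  also have "\<dots> = 1 + card T * (card U - 1)" using U by (simp add: card_cartesian_product)
  finally show "card D \<le> 1 + card T * (card U - 1)" .
  fix h t u assume htu: "h \<in> H" "t \<in> T" "u \<in> U"
  have c: "h \<in> carrier G" "t \<in> carrier G" "u \<in> carrier G" using htu T U by (auto intro: mem_carrier)
  then have tu: "t \<otimes> u \<in> carrier G" by simp
  define s where "s = c (t \<otimes> u)"
  have s: "s \<in> T" "s \<in> carrier G" using cT[OF tu] T unfolding s_def by auto
  have "\<phi> (t, u) \<in> D" unfolding Dphi using htu by auto
  moreover have "h \<otimes> t \<otimes> u = h \<otimes> \<phi> (t, u) \<otimes> s"
    unfolding \<phi>_def using c s by (simp add: s_def[symmetric] m_assoc)
  ultimately show "\<exists>d\<in>D. \<exists>s\<in>T. h \<otimes> t \<otimes> u = h \<otimes> d \<otimes> s" using s by blast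
qed



lemma main_H:
  fixes G :: "('a, 'b) monoid_scheme" (structure)
  assumes G: "group G" and H: "subgroup H G"
    and T: "T \<subseteq> carrier G" "finite T" "T \<noteq> {}"
    and Tex: "\<forall>x\<in>carrier G. \<exists>s\<in>T. x \<otimes> inv s \<in> H"
    and Tun: "\<forall>h\<in>H. \<forall>h'\<in>H. \<forall>t\<in>T. \<forall>t'\<in>T. h \<otimes> t = h' \<otimes> t' \<longrightarrow> t = t'"
    and sig: "inj_on \<sigma> (carrier G)" and tau: "inj_on \<tau> (carrier G)"
    and disj: "\<sigma> ` carrier G \<inter> \<tau> ` carrier G = {}"
    and U1: "U1 \<subseteq> carrier G" "finite U1" "\<one> \<in> U1" "\<forall>y\<in>carrier G. \<exists>u\<in>U1. \<sigma> y = y \<otimes> u"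
    and U2: "U2 \<subseteq> carrier G" "finite U2" "\<one> \<in> U2" "\<forall>y\<in>carrier G. \<exists>u\<in>U2. \<tau> y = y \<otimes> u"
  shows "\<exists>m n. paradoxical_decomp (G\<lparr>carrier := H\<rparr>) m n \<and> m \<le> 1 + card T * (card U1 - 1)
            \<and> n \<le> 1 + card T * (card U2 - 1)"
proof -
  interpret group G by fact
  interpret subgroup H G by fact
  define c where "c x = (SOME s. s \<in> T \<and> x \<otimes> inv s \<in> H)" for x
  have cT: "c x \<in> T \<and> x \<otimes> inv (c x) \<in> H" if xc: "x \<in> carrier G" for x
  proof -
    have ex: "\<exists>s. s \<in> T \<and> x \<otimes> inv s \<in> H" using Tex xc by blast
    show ?thesis unfolding c_def using someI_ex[OF ex] .
  qed
  have ct: "c t = t" if t: "t \<in> T" for t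
  proof -
    have tc: "t \<in> carrier G" using t T by auto
    have h: "t \<otimes> inv (c t) \<in> H" "c t \<in> T" using cT[OF tc] by auto
    have ctc: "c t \<in> carrier G" using h T by auto
    have "t \<otimes> inv (c t) \<otimes> c t = \<one> \<otimes> t" using tc ctc by (simp add: m_assoc)
    then show ?thesis using Tun[rule_format, OF h(1) subgroup.one_closed[OF H] h(2) t] by simp
  qed
  define D1 where "D1 = (\<lambda>p. fst p \<otimes> snd p \<otimes> inv (c (fst p \<otimes> snd p))) ` (T \<times> U1)"
  define D2 where "D2 = (\<lambda>p. fst p \<otimes> snd p \<otimes> inv (c (fst p \<otimes> snd p))) ` (T \<times> U2)"
  have cT': "\<forall>x\<in>carrier G. c x \<in> T \<and> x \<otimes> inv (c x) \<in> H" using cT by blast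
  have ct': "\<forall>t\<in>T. c t = t" using ct by blast
  note P1 = Dprops[OF G H T cT' ct' U1(1,2,3) D1_def]
  note P2 = Dprops[OF G H T cT' ct' U2(1,2,3) D2_def]
  define A where "A p = (\<lambda>d. fst p \<otimes> d) ` (if snd p then D2 else D1)" for p
  define mul where "mul X = (\<lambda>p. fst p \<otimes> snd p) ` (X \<times> T)" for X
  have mulc: "mul X \<subseteq> carrier G" if "X \<subseteq> H" for X
  proof
    fix x assume "x \<in> mul X"
    then obtain a b where ab: "a \<in> X" "b \<in> T" "x = a \<otimes> b" unfolding mul_def by auto
    have "a \<in> carrier G" "b \<in> carrier G" using ab that T subgroup.subset[OF H] by auto
    then show "x \<in> carrier G" using ab by simp
  qed
  have cardmul: "card (mul X) = card X * card T" if X: "X \<subseteq> H" "finite X" for X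
  proof -
    have "inj_on (\<lambda>p. fst p \<otimes> snd p) (X \<times> T)"
    proof (rule inj_onI)
      fix p q assume pq: "p \<in> X \<times> T" "q \<in> X \<times> T" "fst p \<otimes> snd p = fst q \<otimes> snd q"
      obtain h t where p: "p = (h, t)" "h \<in> X" "t \<in> T" using pq(1) by auto
      obtain h' t' where q: "q = (h', t')" "h' \<in> X" "t' \<in> T" using pq(2) by auto
      have hH: "h \<in> H" "h' \<in> H" using p q X by auto
      have eq: "h \<otimes> t = h' \<otimes> t'" using pq(3) p q by simp
      have e: "t = t'" using Tun[rule_format, OF hH p(3) q(3) eq] .
      have cc: "h \<in> carrier G" "h' \<in> carrier G" "t \<in> carrier G" using hH p T by (auto intro: mem_carrier)
      have "h = h'" using eq e cc by simp
      then show "p = q" using p q e by simp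
    qed
    then show ?thesis unfolding mul_def by (simp add: card_image card_cartesian_product)
  qed
  have hall: "card F \<le> card (\<Union>(A ` F))" if F: "F \<subseteq> H \<times> UNIV" "finite F" for F
  proof -
    define F1 where "F1 = {h. (h, False) \<in> F}"
    define F2 where "F2 = {h. (h, True) \<in> F}"
    have F1H: "F1 \<subseteq> H" "F2 \<subseteq> H" using F unfolding F1_def F2_def by auto
    have fF: "finite F1" "finite F2"
    proof -
      have "F1 = fst ` (F \<inter> (UNIV \<times> {False}))" unfolding F1_def by force
      then show "finite F1" using F by simp
      have "F2 = fst ` (F \<inter> (UNIV \<times> {True}))" unfolding F2_def by force
      then show "finite F2" using F by simp
    qed
    have Feq: "F = (\<lambda>h. (h, False)) ` F1 \<union> (\<lambda>h. (h, True)) ` F2"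
    proof
      show "F \<subseteq> (\<lambda>h. (h, False)) ` F1 \<union> (\<lambda>h. (h, True)) ` F2"
      proof
        fix p assume pF: "p \<in> F"
        obtain h b where hb: "p = (h, b)" by fastforce
        show "p \<in> (\<lambda>h. (h, False)) ` F1 \<union> (\<lambda>h. (h, True)) ` F2"
        proof (cases b)
          case True
          then have "h \<in> F2" using pF hb unfolding F2_def by simp
          then show ?thesis using hb True by blast
        next
          case False
          then have "h \<in> F1" using pF hb unfolding F1_def by simp
          then show ?thesis using hb False by blast
        qed
      qed
      show "(\<lambda>h. (h, False)) ` F1 \<union> (\<lambda>h. (h, True)) ` F2 \<subseteq> F"
        unfolding F1_def F2_def by auto
    qed
    have i1: "inj_on (\<lambda>h. (h, False)) F1" "inj_on (\<lambda>h. (h, True)) F2" by (auto simp: inj_on_def)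
    have dj0: "(\<lambda>h. (h, False)) ` F1 \<inter> (\<lambda>h. (h, True)) ` F2 = {}" by auto
    have "card ((\<lambda>h. (h, False)) ` F1 \<union> (\<lambda>h. (h, True)) ` F2)
        = card ((\<lambda>h. (h, False)) ` F1) + card ((\<lambda>h. (h, True)) ` F2)"
      using fF dj0 by (intro card_Un_disjoint) auto
    then have cF: "card F = card F1 + card F2"
      using Feq card_image[OF i1(1)] card_image[OF i1(2)] by simp
    define S where "S = \<Union>(A ` F)"
    have SH: "S \<subseteq> H" unfolding S_def A_def using F P1(1) P2(1) by (auto intro!: m_closed split: if_splits)
    have fS: "finite S" unfolding S_def A_def using F P1(2) P2(2) by auto
    have s1: "\<sigma> ` mul F1 \<subseteq> mul S"
    proof
      fix x assume "x \<in> \<sigma> ` mul F1"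
      then obtain h t where ht: "h \<in> F1" "t \<in> T" "x = \<sigma> (h \<otimes> t)" unfolding mul_def by auto
      have hH: "h \<in> H" using ht F1H by auto
      have "h \<in> carrier G" "t \<in> carrier G" using hH ht T subgroup.subset[OF H] by auto
      then have "h \<otimes> t \<in> carrier G" by simp
      then obtain u where u: "u \<in> U1" "\<sigma> (h \<otimes> t) = h \<otimes> t \<otimes> u" using U1(4) by blast
      obtain d s where ds: "d \<in> D1" "s \<in> T" "h \<otimes> t \<otimes> u = h \<otimes> d \<otimes> s" using P1(5)[OF hH ht(2) u(1)] by blast
      have "h \<otimes> d \<in> S" unfolding S_def A_def using ht(1) ds(1) unfolding F1_def by force
      then show "x \<in> mul S" unfolding mul_def using ht u ds by force
    qed
    have s2: "\<tau> ` mul F2 \<subseteq> mul S"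
    proof
      fix x assume "x \<in> \<tau> ` mul F2"
      then obtain h t where ht: "h \<in> F2" "t \<in> T" "x = \<tau> (h \<otimes> t)" unfolding mul_def by auto
      have hH: "h \<in> H" using ht F1H by auto
      have "h \<in> carrier G" "t \<in> carrier G" using hH ht T subgroup.subset[OF H] by auto
      then have "h \<otimes> t \<in> carrier G" by simp
      then obtain u where u: "u \<in> U2" "\<tau> (h \<otimes> t) = h \<otimes> t \<otimes> u" using U2(4) by blast
      obtain d s where ds: "d \<in> D2" "s \<in> T" "h \<otimes> t \<otimes> u = h \<otimes> d \<otimes> s" using P2(5)[OF hH ht(2) u(1)] by blast
      have "h \<otimes> d \<in> S" unfolding S_def A_def using ht(1) ds(1) unfolding F2_def by force
      then show "x \<in> mul S" unfolding mul_def using ht u ds by force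
    qed
    have m1: "mul F1 \<subseteq> carrier G" "mul F2 \<subseteq> carrier G" using mulc F1H by auto
    have fm: "finite (mul F1)" "finite (mul F2)" "finite (mul S)"
      unfolding mul_def using fF fS T by auto
    have dj: "\<sigma> ` mul F1 \<inter> \<tau> ` mul F2 = {}" using disj m1 by blast
    have "card (mul F1) + card (mul F2) = card (\<sigma> ` mul F1) + card (\<tau> ` mul F2)"
      using card_image[OF inj_on_subset[OF sig m1(1)]] card_image[OF inj_on_subset[OF tau m1(2)]] by simp
    also have "\<dots> = card (\<sigma> ` mul F1 \<union> \<tau> ` mul F2)"
      using dj fm by (simp add: card_Un_disjoint)
    also have "\<dots> \<le> card (mul S)" using s1 s2 fm by (intro card_mono) auto
    finally have "card F1 * card T + card F2 * card T \<le> card S * card T"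
      using cardmul F1H fF SH fS by simp
    then have "(card F1 + card F2) * card T \<le> card S * card T" by (simp add: add_mult_distrib)
    moreover have "card T > 0" using T by (simp add: card_gt_0_iff)
    ultimately have "card F1 + card F2 \<le> card S" by simp
    then show ?thesis using cF S_def by simp
  qed
  have finA: "finite (A p)" for p unfolding A_def using P1(2) P2(2) by auto
  obtain f where f: "inj_on f (H \<times> UNIV)" "\<forall>p\<in>H \<times> UNIV. f p \<in> A p"
    using hall_inf[of "H \<times> UNIV" A, OF finA hall] by blast
  have f1: "f (h, False) \<in> (\<lambda>d. h \<otimes> d) ` D1" if hH: "h \<in> H" for h
  proof -
    have "(h, False) \<in> H \<times> UNIV" using hH by simp
    then have "f (h, False) \<in> A (h, False)" using f(2) by blast
    then show ?thesis unfolding A_def by simp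
  qed
  have f2: "f (h, True) \<in> (\<lambda>d. h \<otimes> d) ` D2" if hH: "h \<in> H" for h
  proof -
    have "(h, True) \<in> H \<times> UNIV" using hH by simp
    then have "f (h, True) \<in> A (h, True)" using f(2) by blast
    then show ?thesis unfolding A_def by simp
  qed
  have ne: "D1 \<noteq> {}" "D2 \<noteq> {}" using P1(3) P2(3) by auto
  have "paradoxical_decomp (G\<lparr>carrier := H\<rparr>) (card D1) (card D2)"
    by (rule build_decomp[OF G H P1(1,2) ne(1) P2(1,2) ne(2) f1 f2 f(1)])
  then show ?thesis using P1(4) P2(4) by blast
qed



lemma theorem1_aux:
  fixes G :: "('a, 'b) monoid_scheme" (structure) and H :: "'a set"
  assumes "group G"
    and "non_amenable G"
    and "subgroup H G"
    and "finite (rcosets\<^bsub>G\<^esub> H)"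
  shows "int (tarski_number (G\<lparr>carrier := H\<rparr>)) - 2
           \<le> int (card (rcosets\<^bsub>G\<^esub> H)) * (int (tarski_number G) - 2)"
proof -
  note G = assms(1) and Hs = assms(3)
  interpret group G by fact
  have ex: "\<exists>k m n. m + n = k \<and> paradoxical_decomp G m n"
    using assms(2) unfolding non_amenable_def admits_paradoxical_decomp_def by blast
  have "\<exists>m n. m + n = tarski_number G \<and> paradoxical_decomp G m n"
    unfolding tarski_number_def by (rule LeastI_ex[OF ex])
  then obtain m0 n0 where tG': "m0 + n0 = tarski_number G" and d0: "paradoxical_decomp G m0 n0"
    by blast
  have tG: "tarski_number G = m0 + n0" using tG' by simp
  obtain P Q g h where m0: "0 < m0" and n0: "0 < n0"
    and Pg: "\<forall>i<m0. P i \<subseteq> carrier G \<and> g i \<in> carrier G"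
    and Qh: "\<forall>j<n0. Q j \<subseteq> carrier G \<and> h j \<in> carrier G"
    and dP: "\<forall>i<m0. \<forall>i'<m0. i \<noteq> i' \<longrightarrow> P i \<inter> P i' = {}"
    and dQ: "\<forall>j<n0. \<forall>j'<n0. j \<noteq> j' \<longrightarrow> Q j \<inter> Q j' = {}"
    and dPQ: "\<forall>i<m0. \<forall>j<n0. P i \<inter> Q j = {}"
    and cP: "(\<Union>i<m0. P i #>\<^bsub>G\<^esub> g i) = carrier G"
    and cQ: "(\<Union>j<n0. Q j #>\<^bsub>G\<^esub> h j) = carrier G"
    by (insert d0[unfolded paradoxical_decomp_def], elim conjE exE, rule that, assumption+)
  obtain \<sigma> U1 where s: "inj_on \<sigma> (carrier G)" "\<sigma> ` carrier G \<subseteq> (\<Union>i<m0. P i)" "U1 \<subseteq> carrier G"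
     "finite U1" "card U1 \<le> m0" "\<one> \<in> U1" "\<forall>y\<in>carrier G. \<exists>u\<in>U1. \<sigma> y = y \<otimes> u"
    using one_side[OF G m0 Pg dP cP] by blast
  obtain \<tau> U2 where t: "inj_on \<tau> (carrier G)" "\<tau> ` carrier G \<subseteq> (\<Union>j<n0. Q j)" "U2 \<subseteq> carrier G"
     "finite U2" "card U2 \<le> n0" "\<one> \<in> U2" "\<forall>y\<in>carrier G. \<exists>u\<in>U2. \<tau> y = y \<otimes> u"
    using one_side[OF G n0 Qh dQ cQ] by blast
  have "(\<Union>i<m0. P i) \<inter> (\<Union>j<n0. Q j) = {}"
  proof (rule equals0I)
    fix x assume "x \<in> (\<Union>i<m0. P i) \<inter> (\<Union>j<n0. Q j)"
    then obtain i j where ij: "i < m0" "j < n0" "x \<in> P i" "x \<in> Q j" by auto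
    have "P i \<inter> Q j = {}" using dPQ ij(1,2) by blast
    then show False using ij(3,4) by blast
  qed
  then have disj: "\<sigma> ` carrier G \<inter> \<tau> ` carrier G = {}" using s(2) t(2) by blast
  obtain T where T: "T \<subseteq> carrier G" "finite T" "card T = card (rcosets H)"
    "\<forall>x\<in>carrier G. \<exists>s\<in>T. x \<otimes> inv s \<in> H"
    "\<forall>h\<in>H. \<forall>h'\<in>H. \<forall>t\<in>T. \<forall>t'\<in>T. h \<otimes> t = h' \<otimes> t' \<longrightarrow> t = t'"
    using reps[OF G Hs assms(4)] by blast
  have Tne: "T \<noteq> {}" using T(4) one_closed by blast
  obtain m n where mn: "paradoxical_decomp (G\<lparr>carrier := H\<rparr>) m n"
    "m \<le> 1 + card T * (card U1 - 1)" "n \<le> 1 + card T * (card U2 - 1)"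
    using main_H[OF G Hs T(1,2) Tne T(4,5) s(1) t(1) disj s(3,4,6,7) t(3,4,6,7)] by blast
  have tH: "tarski_number (G\<lparr>carrier := H\<rparr>) \<le> m + n"
    unfolding tarski_number_def by (rule Least_le) (use mn(1) in blast)
  define k where "k = card T"
  have c1: "1 \<le> card U1" "1 \<le> card U2" using s(4,6) t(4,6) by (auto simp: Suc_le_eq card_gt_0_iff)
  have b1: "k * (card U1 - 1) \<le> k * (m0 - 1)" "k * (card U2 - 1) \<le> k * (n0 - 1)"
    using s(5) t(5) by (auto intro: mult_le_mono2)
  have "tarski_number (G\<lparr>carrier := H\<rparr>) \<le> 2 + k * (m0 - 1) + k * (n0 - 1)"
    using tH mn(2,3) b1 unfolding k_def by linarith
  then have "int (tarski_number (G\<lparr>carrier := H\<rparr>)) \<le> int (2 + k * (m0 - 1) + k * (n0 - 1))"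
    by (simp only: of_nat_le_iff)
  also have "\<dots> = 2 + int k * (int m0 - 1) + int k * (int n0 - 1)"
  proof -
    have "1 \<le> m0" "1 \<le> n0" using m0 n0 by auto
    then have "int (m0 - 1) = int m0 - 1" "int (n0 - 1) = int n0 - 1" by (simp_all add: of_nat_diff)
    then show ?thesis by simp
  qed
  finally have "int (tarski_number (G\<lparr>carrier := H\<rparr>)) \<le> 2 + int k * (int m0 - 1) + int k * (int n0 - 1)" .
  moreover have "int (card (rcosets H)) = int k" using T(3) k_def by simp
  ultimately show ?thesis using tG by (simp add: algebra_simps)
qed

theorem theorem1:
  fixes G :: "('a, 'b) monoid_scheme" and H :: "'a set"
  assumes "group G"
    and "non_amenable G"
    and "subgroup H G"
    and "finite (rcosets\<^bsub>G\<^esub> H)"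
  shows "int (tarski_number (G\<lparr>carrier := H\<rparr>)) - 2
           \<le> int (card (rcosets\<^bsub>G\<^esub> H)) * (int (tarski_number G) - 2)"
  using theorem1_aux[OF assms] .


end
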